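(* For every integer $d\ge 1$, the $d$-dimensional hypercube $Q_d$ is $\mathbb{Z}_{2^d}$-distance antimagic if and only if $d$ is odd.
   Context: $Q_d$ is the graph whose vertices are the binary strings of length $d$, two being adjacent iff they differ in exactly one position. $\mathbb{Z}_m$ is the cyclic group of integers modulo $m$. For a graph $G$ with $n$ vertices and an Abelian group $A$ of order $n$ (written additively), and a bijection $f:V(G)\to A$, the weight of $x$ is $w_f(x)=\sum_{y\in N(x)} f(y)$ computed in $A$ ($N(x)$ the open neighbourhood). $f$ is an $A$-distance antimagic labelling if all weights are pairwise distinct; $G$ is $A$-distance antimagic if it admits such a labelling. *)

theory Defs
  imports Main
begin

definition hypercube_vertices :: "nat \<Rightarrow> bool list set" where
  "hypercube_vertices d = {xs. length xs = d}"

definition hypercube_adj :: "bool list \<Rightarrow> bool list \<Rightarrow> bool" where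
  "hypercube_adj xs ys \<longleftrightarrow> length xs = length ys \<and>
     card {i. i < length xs \<and> xs ! i \<noteq> ys ! i} = 1"

definition nbhd :: "'a set \<Rightarrow> ('a \<Rightarrow> 'a \<Rightarrow> bool) \<Rightarrow> 'a \<Rightarrow> 'a set" where
  "nbhd V adj x = {y \<in> V. adj x y}"

(* Z_m is represented by the residues {0..<m}; addition is taken mod m.
   Weight of x under labelling f, computed in Z_m. *)
definition Zm_weight :: "nat \<Rightarrow> 'a set \<Rightarrow> ('a \<Rightarrow> 'a \<Rightarrow> bool) \<Rightarrow> ('a \<Rightarrow> nat) \<Rightarrow> 'a \<Rightarrow> nat" where
  "Zm_weight m V adj f x = (\<Sum>y\<in>nbhd V adj x. f y) mod m"

definition Zm_distance_antimagic_labelling ::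
  "nat \<Rightarrow> 'a set \<Rightarrow> ('a \<Rightarrow> 'a \<Rightarrow> bool) \<Rightarrow> ('a \<Rightarrow> nat) \<Rightarrow> bool" where
  "Zm_distance_antimagic_labelling m V adj f \<longleftrightarrow>
     bij_betw f V {0..<m} \<and> inj_on (Zm_weight m V adj f) V"

definition Zm_distance_antimagic :: "nat \<Rightarrow> 'a set \<Rightarrow> ('a \<Rightarrow> 'a \<Rightarrow> bool) \<Rightarrow> bool" where
  "Zm_distance_antimagic m V adj \<longleftrightarrow> (\<exists>f. Zm_distance_antimagic_labelling m V adj f)"

end

theory Submission imports Defs begin

definition flip :: "bool list \<Rightarrow> nat \<Rightarrow> bool list" where
  "flip xs i = xs[i := \<not> xs ! i]"

fun val :: "bool list \<Rightarrow> nat" where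
  "val [] = 0"
| "val (b # bs) = (if b then 1 else 0) + 2 * val bs"

lemma val_lt: "val xs < 2 ^ length xs"
  by (induction xs) auto

lemma val_inj: "length xs = length ys \<Longrightarrow> val xs = val ys \<Longrightarrow> xs = ys"
proof (induction xs arbitrary: ys)
  case Nil then show ?case by simp
next
  case (Cons a as)
  then obtain b bs where ys: "ys = b # bs" by (cases ys) auto
  have "val (a#as) mod 2 = val (b#bs) mod 2" using Cons.prems ys by simp
  then have "a = b" by (cases a; cases b; simp; presburger)
  then have "val as = val bs" using Cons.prems ys by auto
  then show ?case using Cons ys \<open>a = b\<close> by auto
qed

lemma finite_V: "finite (hypercube_vertices d)"
proof -
  have "hypercube_vertices d = {xs. set xs \<subseteq> (UNIV::bool set) \<and> length xs = d}"
    by (auto simp: hypercube_vertices_def)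
  then show ?thesis using finite_lists_length_eq[of "UNIV::bool set" d] by simp
qed

lemma card_V: "card (hypercube_vertices d) = 2 ^ d"
proof -
  have "hypercube_vertices d = {xs. set xs \<subseteq> (UNIV::bool set) \<and> length xs = d}"
    by (auto simp: hypercube_vertices_def)
  then show ?thesis using card_lists_length_eq[of "UNIV::bool set" d] by simp
qed

lemma bij_val: "bij_betw val (hypercube_vertices d) {0..<2^d}"
proof -
  have inj: "inj_on val (hypercube_vertices d)"
    by (auto intro!: inj_onI val_inj simp: hypercube_vertices_def)
  have sub: "val ` hypercube_vertices d \<subseteq> {0..<2^d}"
    using val_lt by (auto simp: hypercube_vertices_def)
  have "card (val ` hypercube_vertices d) = card {0..<(2::nat)^d}"
    using card_image[OF inj] card_V by simp
  then have "val ` hypercube_vertices d = {0..<2^d}"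
    using card_subset_eq[OF _ sub] by simp
  then show ?thesis using inj by (simp add: bij_betw_def)
qed

lemma flip_length[simp]: "length (flip xs i) = length xs"
  by (simp add: flip_def)

lemma flip_nth: "i < length xs \<Longrightarrow> flip xs i ! j = (if j = i then \<not> xs ! i else xs ! j)"
  by (simp add: flip_def)

lemma flip_flip: "i < length xs \<Longrightarrow> flip (flip xs i) i = xs"
  by (auto simp: flip_def)

lemma inj_flip: "inj_on (flip xs) {..<length xs}"
proof (rule inj_onI)
  fix i j assume i: "i \<in> {..<length xs}" and j: "j \<in> {..<length xs}" and e: "flip xs i = flip xs j"
  show "i = j"
  proof (rule ccontr)
    assume "i \<noteq> j"
    have "flip xs i ! i = flip xs j ! i" using e by simp
    then show False using i j \<open>i \<noteq> j\<close> by (simp add: flip_nth)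
  qed
qed

lemma nbhd_eq:
  assumes "length xs = d"
  shows "nbhd (hypercube_vertices d) hypercube_adj xs = flip xs ` {..<d}"
proof
  show "nbhd (hypercube_vertices d) hypercube_adj xs \<subseteq> flip xs ` {..<d}"
  proof
    fix y assume "y \<in> nbhd (hypercube_vertices d) hypercube_adj xs"
    then have m: "y \<in> hypercube_vertices d" "hypercube_adj xs y" by (simp_all add: nbhd_def)
    from m(1) have ly: "length y = d" by (simp add: hypercube_vertices_def)
    from m(2) have c: "card {i. i < length xs \<and> xs ! i \<noteq> y ! i} = 1"
      unfolding hypercube_adj_def by blast
    from c obtain i where ii: "{i. i < length xs \<and> xs ! i \<noteq> y ! i} = {i}"
      using card_1_singleton_iff[THEN iffD1, OF c[unfolded One_nat_def]] by blast
    have "i \<in> {i. i < length xs \<and> xs ! i \<noteq> y ! i}" using ii by simp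
    then have id: "i < d" using assms by simp
    have "y = flip xs i"
    proof (rule nth_equalityI)
      show "length y = length (flip xs i)" using ly assms by simp
      fix j assume "j < length y"
      then have jx: "j < length xs" using ly assms by simp
      show "y ! j = flip xs i ! j"
      proof (cases "j = i")
        case True
        then have "i \<in> {i. i < length xs \<and> xs ! i \<noteq> y ! i}" using ii by simp
        then have "xs ! i \<noteq> y ! i" by simp
        then show ?thesis using True id assms by (simp add: flip_nth)
      next
        case False
        then have "j \<notin> {i. i < length xs \<and> xs ! i \<noteq> y ! i}" using ii by simp
        then have "xs ! j = y ! j" using jx by simp
        then show ?thesis using False id assms by (simp add: flip_nth)
      qed
    qed
    then show "y \<in> flip xs ` {..<d}" using id by auto
  qed
next
  show "flip xs ` {..<d} \<subseteq> nbhd (hypercube_vertices d) hypercube_adj xs"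
  proof
    fix y assume "y \<in> flip xs ` {..<d}"
    then obtain i where i: "i < d" and y: "y = flip xs i" by auto
    have "{j. j < length xs \<and> xs ! j \<noteq> y ! j} = {i}"
    proof (rule set_eqI)
      fix j show "j \<in> {j. j < length xs \<and> xs ! j \<noteq> y ! j} \<longleftrightarrow> j \<in> {i}"
        using i assms y by (cases "j = i") (simp_all add: flip_nth)
    qed
    then show "y \<in> nbhd (hypercube_vertices d) hypercube_adj xs"
      using assms y by (auto simp: nbhd_def hypercube_vertices_def hypercube_adj_def)
  qed
qed

lemma sum_nbhd:
  assumes "length xs = d"
  shows "(\<Sum>y\<in>nbhd (hypercube_vertices d) hypercube_adj xs. g y) = (\<Sum>i<d. g (flip xs i))"
  using nbhd_eq[OF assms] sum.reindex[OF inj_flip[of xs], of g] assms by simp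

lemma val_flip_sum:
  "(\<Sum>i<length xs. int (val (flip xs i))) = (int (length xs) - 2) * int (val xs) + 2 ^ length xs - 1"
proof (induction xs)
  case Nil then show ?case by simp
next
  case (Cons a as)
  have "(\<Sum>i<length (a # as). int (val (flip (a # as) i)))
       = int (val (flip (a#as) 0)) + (\<Sum>i<length as. int (val (flip (a # as) (Suc i))))"
    by (simp only: length_Cons sum.lessThan_Suc_shift)
  also have "(\<Sum>i<length as. int (val (flip (a # as) (Suc i))))
     = (\<Sum>i<length as. (if a then 1 else 0) + 2 * int (val (flip as i)))"
    by (simp add: flip_def)
  also have "\<dots> = int (length as) * (if a then 1 else 0) + 2 * (\<Sum>i<length as. int (val (flip as i)))"
    by (simp add: sum.distrib sum_distrib_left)
  finally show ?case using Cons.IH by (simp add: flip_def algebra_simps)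
qed

lemma gauss2: "2 * (\<Sum>k\<in>{0..<n}. k) = n * (n - 1::nat)"
proof (induction n)
  case 0 then show ?case by simp
next
  case (Suc n) then show ?case by (cases n) (simp_all add: algebra_simps)
qed


lemma S_int:
  assumes "xs \<in> hypercube_vertices d"
  shows "int (\<Sum>y\<in>nbhd (hypercube_vertices d) hypercube_adj xs. val y)
         = (int d - 2) * int (val xs) + 2 ^ d - 1"
proof -
  have l: "length xs = d" using assms by (simp add: hypercube_vertices_def)
  have "int (\<Sum>y\<in>nbhd (hypercube_vertices d) hypercube_adj xs. val y)
       = (\<Sum>i<d. int (val (flip xs i)))"
    using sum_nbhd[OF l, of val] by simp
  also have "\<dots> = (int d - 2) * int (val xs) + 2 ^ d - 1"
    using val_flip_sum[of xs] l by simp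
  finally show ?thesis .
qed

lemma odd_case:
  assumes "odd d"
  shows "Zm_distance_antimagic (2 ^ d) (hypercube_vertices d) hypercube_adj"
proof -
  let ?V = "hypercube_vertices d"
  let ?S = "\<lambda>xs. \<Sum>y\<in>nbhd ?V hypercube_adj xs. val y"
  have "inj_on (Zm_weight (2 ^ d) ?V hypercube_adj val) ?V"
  proof (rule inj_onI)
    fix xs ys assume xs: "xs \<in> ?V" and ys: "ys \<in> ?V"
      and e: "Zm_weight (2 ^ d) ?V hypercube_adj val xs = Zm_weight (2 ^ d) ?V hypercube_adj val ys"
    have "?S xs mod 2 ^ d = ?S ys mod 2 ^ d" using e by (simp add: Zm_weight_def)
    then have "int (?S xs) mod 2 ^ d = int (?S ys) mod 2 ^ d"
      by (metis of_nat_numeral of_nat_power zmod_int)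
    then have "2 ^ d dvd int (?S xs) - int (?S ys)"
      by (simp add: mod_eq_dvd_iff)
    also have "int (?S xs) - int (?S ys) = (int d - 2) * (int (val xs) - int (val ys))"
      using S_int[OF xs] S_int[OF ys] by (simp add: algebra_simps)
    finally have dv: "(2::int) ^ d dvd (int d - 2) * (int (val xs) - int (val ys))" .
    have "odd (int d - 2)" using assms by simp
    then have "coprime ((2::int) ^ d) (int d - 2)"
      by (simp add: coprime_power_left_iff coprime_left_2_iff_odd)
    then have dv2: "(2::int) ^ d dvd (int (val xs) - int (val ys))"
      using dv coprime_dvd_mult_right_iff by blast
    have "val xs < 2 ^ d" "val ys < 2 ^ d" using val_lt[of xs] val_lt[of ys] xs ys
      by (auto simp: hypercube_vertices_def)
    then have "int (val xs) < int (2 ^ d)" "int (val ys) < int (2 ^ d)"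
      by (simp_all only: of_nat_less_iff)
    then have "\<bar>int (val xs) - int (val ys)\<bar> < int (2 ^ d)" unfolding abs_less_iff by linarith
    then have "\<bar>int (val xs) - int (val ys)\<bar> < 2 ^ d" by simp
    then have "int (val xs) - int (val ys) = 0"
      using dvd_imp_le_int[OF _ dv2] by fastforce
    then show "xs = ys" using val_inj xs ys by (auto simp: hypercube_vertices_def)
  qed
  then show ?thesis using bij_val[of d]
    unfolding Zm_distance_antimagic_def Zm_distance_antimagic_labelling_def by blast
qed

lemma even_case:
  assumes "even d" "d \<ge> 1"
  shows "\<not> Zm_distance_antimagic (2 ^ d) (hypercube_vertices d) hypercube_adj"
proof
  let ?V = "hypercube_vertices d"
  let ?N = "(2::nat) ^ d"
  assume "Zm_distance_antimagic ?N ?V hypercube_adj"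
  then obtain f where bf: "bij_betw f ?V {0..<?N}"
    and iw: "inj_on (Zm_weight ?N ?V hypercube_adj f) ?V"
    unfolding Zm_distance_antimagic_def Zm_distance_antimagic_labelling_def by blast
  define w where "w = Zm_weight ?N ?V hypercube_adj f"
  define T where "T = (\<Sum>k\<in>{0..<?N}. k)"
  have fin: "finite ?V" by (rule finite_V)
  have wsub: "w ` ?V \<subseteq> {0..<?N}" by (auto simp: w_def Zm_weight_def)
  have "card (w ` ?V) = card {0..<?N}"
    using card_image[OF iw[folded w_def]] card_V by simp
  then have "w ` ?V = {0..<?N}" using card_subset_eq[OF _ wsub] by simp
  then have "bij_betw w ?V {0..<?N}" using iw[folded w_def] by (simp add: bij_betw_def)
  then have sw: "(\<Sum>x\<in>?V. w x) = T" unfolding T_def by (rule sum.reindex_bij_betw)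
  have sf: "(\<Sum>x\<in>?V. f x) = T" unfolding T_def using bf by (rule sum.reindex_bij_betw)
  have "(\<Sum>x\<in>?V. \<Sum>y\<in>nbhd ?V hypercube_adj x. f y) = (\<Sum>x\<in>?V. \<Sum>i<d. f (flip x i))"
    by (rule sum.cong[OF refl], rule sum_nbhd) (simp add: hypercube_vertices_def)
  also have "\<dots> = (\<Sum>i<d. \<Sum>x\<in>?V. f (flip x i))" by (rule sum.swap)
  also have "\<dots> = (\<Sum>i<d. \<Sum>x\<in>?V. f x)"
  proof (rule sum.cong[OF refl])
    fix i assume i: "i \<in> {..<d}"
    show "(\<Sum>x\<in>?V. f (flip x i)) = (\<Sum>x\<in>?V. f x)"
      by (rule sum.reindex_bij_witness[of _ "\<lambda>x. flip x i" "\<lambda>x. flip x i"])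
         (use i in \<open>auto simp: hypercube_vertices_def flip_flip\<close>)
  qed
  also have "\<dots> = d * T" using sf by simp
  finally have tot: "(\<Sum>x\<in>?V. \<Sum>y\<in>nbhd ?V hypercube_adj x. f y) = d * T" .
  have "T mod ?N = (\<Sum>x\<in>?V. w x) mod ?N" using sw by simp
  also have "\<dots> = (\<Sum>x\<in>?V. \<Sum>y\<in>nbhd ?V hypercube_adj x. f y) mod ?N"
    unfolding w_def Zm_weight_def by (rule mod_sum_eq)
  also have "\<dots> = (d * T) mod ?N" using tot by simp
  also have "\<dots> = 0"
  proof -
    obtain k where k: "d = 2 * k" using assms(1) by blast
    have "d * T = k * (2 * T)" using k by simp
    also have "\<dots> = k * (?N * (?N - 1))" unfolding T_def gauss2 ..
    finally show ?thesis by simp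
  qed
  finally have "?N dvd T" by (simp add: mod_eq_0_iff_dvd)
  then have "2 * ?N dvd 2 * T" by simp
  then have "2 * ?N dvd ?N * (?N - 1)" unfolding T_def gauss2 .
  then have "2 dvd ?N - 1" by (simp add: mult.commute)
  moreover have "even ?N" using assms(2) by simp
  moreover have "?N \<ge> 1" by simp
  ultimately show False by presburger
qed

theorem mainTheorem4:
  fixes d :: nat
  assumes "d \<ge> 1"
  shows "Zm_distance_antimagic (2 ^ d) (hypercube_vertices d) hypercube_adj \<longleftrightarrow> odd d"
  using odd_case even_case assms by blast

end
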